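(* Let $\Bbbk$ be a field. A quantum graded algebra with a straightening law $A$ on a finite poset $(\Pi,<_{\rm st})$ is noetherian and satisfies polynomial growth (PG).
   Context: Quantum graded A.S.L.: an $\mathbb N$-graded $\Bbbk$-algebra $A$ with a finite subset $\Pi$ partially ordered by $<_{\rm st}$ such that (1) elements of $\Pi$ are homogeneous of positive degree; (2) $\Pi$ generates $A$; (3) standard monomials ($1$ and $\alpha_1\cdots\alpha_s$, $\alpha_i\in\Pi$, $\alpha_1\le_{\rm st}\dots\le_{\rm st}\alpha_s$) are linearly independent; (4) for incomparable $\alpha,\beta\in\Pi$, $\alpha\beta$ is a linear combination of terms $\lambda$ or $\lambda\mu$, $\lambda,\mu\in\Pi$, $\lambda\le_{\rm st}\mu$, $\lambda<_{\rm st}\alpha,\beta$; (5) for all $\alpha,\beta\in\Pi$ there is $c\in\Bbbk^\ast$ with $\alpha\beta-c\beta\alpha$ a linear combination of such terms. Polynomial growth (PG), in the sense of Levasseur: there exist $c>0$ and $d\in\mathbb N$ such that $\dim_\Bbbk A_n\le cn^d$ for all $n\ge1$. *)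

theory Defs
  imports Complex_Main
begin

definition k_algebra :: "('k::field \<Rightarrow> 'a::ring_1 \<Rightarrow> 'a) \<Rightarrow> bool" where
  "k_algebra sc \<longleftrightarrow> Vector_Spaces.vector_space sc \<and>
     (\<forall>c x y. sc c (x * y) = sc c x * y \<and> sc c (x * y) = x * sc c y)"

text \<open>N-graded k-algebra: A is the direct sum of the subspaces Agr n,
  with 1 in degree 0 and Agr i * Agr j contained in Agr (i+j).\<close>
definition graded_k_algebra ::
  "('k::field \<Rightarrow> 'a::ring_1 \<Rightarrow> 'a) \<Rightarrow> (nat \<Rightarrow> 'a set) \<Rightarrow> bool" where
  "graded_k_algebra sc Agr \<longleftrightarrow> k_algebra sc \<and>
     (\<forall>n. module.subspace sc (Agr n)) \<and>
     module.span sc (\<Union>n. Agr n) = UNIV \<and>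
     (\<forall>N f. (\<forall>i\<le>N. f i \<in> Agr i) \<and> (\<Sum>i\<le>N. f i) = 0 \<longrightarrow> (\<forall>i\<le>N. f i = 0)) \<and>
     1 \<in> Agr 0 \<and>
     (\<forall>i j x y. x \<in> Agr i \<and> y \<in> Agr j \<longrightarrow> x * y \<in> Agr (i + j))"

definition std_words :: "'a set \<Rightarrow> ('a \<Rightarrow> 'a \<Rightarrow> bool) \<Rightarrow> 'a list set" where
  "std_words Pi lst = {xs. set xs \<subseteq> Pi \<and> sorted_wrt (\<lambda>a b. lst a b \<or> a = b) xs}"

definition lower_terms :: "'a::ring_1 set \<Rightarrow> ('a \<Rightarrow> 'a \<Rightarrow> bool) \<Rightarrow> 'a \<Rightarrow> 'a \<Rightarrow> 'a set" where
  "lower_terms Pi lst \<alpha> \<beta> =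
     {l. l \<in> Pi \<and> lst l \<alpha> \<and> lst l \<beta>} \<union>
     {l * m | l m. l \<in> Pi \<and> m \<in> Pi \<and> (lst l m \<or> l = m) \<and> lst l \<alpha> \<and> lst l \<beta>}"

definition quantum_graded_ASL ::
  "('k::field \<Rightarrow> 'a::ring_1 \<Rightarrow> 'a) \<Rightarrow> (nat \<Rightarrow> 'a set) \<Rightarrow> 'a set \<Rightarrow> ('a \<Rightarrow> 'a \<Rightarrow> bool) \<Rightarrow> bool" where
  "quantum_graded_ASL sc Agr Pi lst \<longleftrightarrow>
     graded_k_algebra sc Agr \<and>
     finite Pi \<and>
     \<comment> \<open>lst is a strict partial order on Pi\<close>
     (\<forall>a\<in>Pi. \<not> lst a a) \<and>
     (\<forall>a\<in>Pi. \<forall>b\<in>Pi. \<forall>c\<in>Pi. lst a b \<and> lst b c \<longrightarrow> lst a c) \<and>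
     \<comment> \<open>(1) homogeneous of positive degree\<close>
     (\<forall>a\<in>Pi. \<exists>n>0. a \<in> Agr n) \<and>
     \<comment> \<open>(2) Pi generates A as a k-algebra\<close>
     module.span sc {prod_list xs | xs. set xs \<subseteq> Pi} = UNIV \<and>
     \<comment> \<open>(3) standard monomials are linearly independent\<close>
     inj_on prod_list (std_words Pi lst) \<and>
     \<not> module.dependent sc (prod_list ` std_words Pi lst) \<and>
     \<comment> \<open>(4) straightening of products of incomparable elements\<close>
     (\<forall>a\<in>Pi. \<forall>b\<in>Pi. a \<noteq> b \<and> \<not> lst a b \<and> \<not> lst b a \<longrightarrow>
        a * b \<in> module.span sc (lower_terms Pi lst a b)) \<and>
     \<comment> \<open>(5) quantum commutation\<close>
     (\<forall>a\<in>Pi. \<forall>b\<in>Pi. \<exists>c. c \<noteq> 0 \<and>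
        a * b - sc c (b * a) \<in> module.span sc (lower_terms Pi lst a b))"

definition left_ideal :: "'a::ring_1 set \<Rightarrow> bool" where
  "left_ideal I \<longleftrightarrow> 0 \<in> I \<and> (\<forall>x\<in>I. \<forall>y\<in>I. x + y \<in> I) \<and> (\<forall>x\<in>I. - x \<in> I) \<and>
     (\<forall>r x. x \<in> I \<longrightarrow> r * x \<in> I)"

definition right_ideal :: "'a::ring_1 set \<Rightarrow> bool" where
  "right_ideal I \<longleftrightarrow> 0 \<in> I \<and> (\<forall>x\<in>I. \<forall>y\<in>I. x + y \<in> I) \<and> (\<forall>x\<in>I. - x \<in> I) \<and>
     (\<forall>r x. x \<in> I \<longrightarrow> x * r \<in> I)"

definition noetherian_ring :: "'a::ring_1 itself \<Rightarrow> bool" where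
  "noetherian_ring _ \<longleftrightarrow>
     (\<forall>I :: nat \<Rightarrow> 'a set. (\<forall>n. left_ideal (I n)) \<and> (\<forall>n. I n \<subseteq> I (Suc n)) \<longrightarrow>
        (\<exists>m. \<forall>n\<ge>m. I n = I m)) \<and>
     (\<forall>I :: nat \<Rightarrow> 'a set. (\<forall>n. right_ideal (I n)) \<and> (\<forall>n. I n \<subseteq> I (Suc n)) \<longrightarrow>
        (\<exists>m. \<forall>n\<ge>m. I n = I m))"

definition polynomial_growth :: "('k::field \<Rightarrow> 'a::ring_1 \<Rightarrow> 'a) \<Rightarrow> (nat \<Rightarrow> 'a set) \<Rightarrow> bool" where
  "polynomial_growth sc Agr \<longleftrightarrow>
     (\<exists>c::real. \<exists>d::nat. c > 0 \<and>
        (\<forall>n\<ge>1. (\<exists>B. finite B \<and> B \<subseteq> Agr n \<and> Agr n \<subseteq> module.span sc B) \<and>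
               real (vector_space.dim sc (Agr n)) \<le> c * real n ^ d))"

end

theory Submission
  imports Defs "HOL-Library.Multiset" "HOL-Library.Infinite_Set" "HOL-Library.FuncSet"
begin


lemma nat_seq_mono_sub:
  fixes f :: "nat \<Rightarrow> nat"
  shows "\<exists>g::nat\<Rightarrow>nat. strict_mono g \<and> (\<forall>i j. i \<le> j \<longrightarrow> f (g i) \<le> f (g j))"
proof -
  define S where "S = {n. \<forall>m\<ge>n. f n \<le> f m}"
  have ex: "\<exists>n\<ge>N. n \<in> S" for N
  proof -
    define v where "v = (LEAST v. \<exists>k\<ge>N. f k = v)"
    have "\<exists>k\<ge>N. f k = v" unfolding v_def by (rule LeastI[of _ "f N"]) auto
    then obtain k where k: "k \<ge> N" "f k = v" by blast
    have "f k \<le> f m" if "m \<ge> k" for m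
    proof -
      have "N \<le> m" using k that by simp
      then have "v \<le> f m" unfolding v_def by (intro Least_le) blast
      then show ?thesis using k by simp
    qed
    then have "k \<in> S" unfolding S_def by blast
    then show ?thesis using k(1) by blast
  qed
  have inf: "infinite S" unfolding infinite_nat_iff_unbounded_le using ex by blast
  define g where "g = enumerate S"
  have sm: "strict_mono g" unfolding g_def strict_mono_def using inf enumerate_mono by blast
  have *: "f (g i) \<le> f (g j)" if "i \<le> j" for i j
  proof -
    have "g i \<in> S" unfolding g_def using inf by (rule enumerate_in_set)
    moreover have "g i \<le> g j" using sm that by (simp add: strict_mono_less_eq)
    ultimately show ?thesis unfolding S_def by blast
  qed
  show ?thesis
    apply (rule exI[of _ g])
    using sm * by blast
qed

lemma dickson_fun:
  fixes C :: "'c set" and f :: "nat \<Rightarrow> 'c \<Rightarrow> nat"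
  assumes "finite C"
  shows "\<exists>g::nat\<Rightarrow>nat. strict_mono g \<and> (\<forall>c\<in>C. \<forall>i j. i \<le> j \<longrightarrow> f (g i) c \<le> f (g j) c)"
  using assms
proof (induction C rule: finite_induct)
  case empty
  have "strict_mono (id::nat\<Rightarrow>nat)" by (simp add: strict_mono_def)
  then show ?case by blast
next
  case (insert c C)
  then obtain g1 :: "nat \<Rightarrow> nat" where g1: "strict_mono g1" "\<forall>c\<in>C. \<forall>i j. i \<le> j \<longrightarrow> f (g1 i) c \<le> f (g1 j) c" by blast
  obtain g2 :: "nat \<Rightarrow> nat" where g2: "strict_mono g2" "\<forall>i j. i \<le> j \<longrightarrow> f (g1 (g2 i)) c \<le> f (g1 (g2 j)) c"
    using nat_seq_mono_sub[of "\<lambda>n. f (g1 n) c"] by blast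
  have "strict_mono (g1 \<circ> g2)" using g1(1) g2(1) by (simp add: strict_mono_def)
  moreover have "\<forall>d\<in>insert c C. \<forall>i j. i \<le> j \<longrightarrow> f ((g1 \<circ> g2) i) d \<le> f ((g1 \<circ> g2) j) d"
  proof (intro ballI allI impI)
    fix d i j assume d: "d \<in> insert c C" and ij: "(i::nat) \<le> j"
    have "g2 i \<le> g2 j" using g2(1) ij by (simp add: strict_mono_less_eq)
    then show "f ((g1 \<circ> g2) i) d \<le> f ((g1 \<circ> g2) j) d"
      using d g1(2) g2(2) ij by auto
  qed
  ultimately show ?case by (rule_tac exI[of _ "g1 \<circ> g2"]) blast
qed

lemma dickson_mset:
  fixes N :: "nat \<Rightarrow> 'c multiset"
  assumes "finite C" "\<And>k. set_mset (N k) \<subseteq> C"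
  shows "\<exists>i j. i < j \<and> N i \<subseteq># N j"
proof -
  obtain g :: "nat \<Rightarrow> nat" where g: "strict_mono g" "\<forall>c\<in>C. \<forall>i j. i \<le> j \<longrightarrow> count (N (g i)) c \<le> count (N (g j)) c"
    using dickson_fun[OF assms(1), of "\<lambda>n c. count (N n) c"] by blast
  have "count (N (g 0)) c \<le> count (N (g 1)) c" for c
  proof (cases "c \<in> C")
    case True then show ?thesis using g(2) by auto
  next
    case False then have "c \<notin># N (g 0)" using assms(2) by blast
    then show ?thesis by (simp add: not_in_iff)
  qed
  then have "N (g 0) \<subseteq># N (g 1)" by (simp add: subseteq_mset_def)
  moreover have "g 0 < g 1" using g(1) by (simp add: strict_mono_def)
  ultimately show ?thesis by blast
qed

lemma rank_exists:
  fixes Pi :: "'a set" and lst :: "'a \<Rightarrow> 'a \<Rightarrow> bool"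
  assumes fin: "finite Pi" and irr: "\<forall>a\<in>Pi. \<not> lst a a"
    and tr: "\<forall>a\<in>Pi. \<forall>b\<in>Pi. \<forall>c\<in>Pi. lst a b \<and> lst b c \<longrightarrow> lst a c"
  shows "\<exists>rk::'a \<Rightarrow> nat. inj_on rk Pi \<and> (\<forall>a\<in>Pi. \<forall>b\<in>Pi. lst a b \<longrightarrow> rk a < rk b)"
proof -
  obtain h where h: "bij_betw h Pi {0..<card Pi}" using ex_bij_betw_finite_nat[OF fin] by blast
  define K where "K = card Pi"
  define pr where "pr a = card {b\<in>Pi. lst b a}" for a
  define rk where "rk a = pr a * K + h a" for a
  have hK: "h a < K" if "a \<in> Pi" for a using h that unfolding K_def bij_betw_def by auto
  have "inj_on rk Pi"
  proof (rule inj_onI)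
    fix a b assume ab: "a \<in> Pi" "b \<in> Pi" "rk a = rk b"
    then have "rk a mod K = rk b mod K" by simp
    then have "h a = h b" using hK ab by (simp add: rk_def)
    then show "a = b" using h ab unfolding bij_betw_def inj_on_def by blast
  qed
  moreover have "rk a < rk b" if "a \<in> Pi" "b \<in> Pi" "lst a b" for a b
  proof -
    have sub: "{c\<in>Pi. lst c a} \<subseteq> {c\<in>Pi. lst c b}"
    proof
      fix c assume "c \<in> {c\<in>Pi. lst c a}"
      then have "c \<in> Pi" "lst c a" by auto
      then show "c \<in> {c\<in>Pi. lst c b}" using tr that by blast
    qed
    have "a \<in> {c\<in>Pi. lst c b}" "a \<notin> {c\<in>Pi. lst c a}" using that irr by auto
    then have "{c\<in>Pi. lst c a} \<subset> {c\<in>Pi. lst c b}" using sub by blast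
    then have "pr a < pr b" unfolding pr_def by (rule psubset_card_mono[rotated]) (use fin in auto)
    then have "pr a + 1 \<le> pr b" by simp
    then have "(pr a + 1) * K \<le> pr b * K" by (rule mult_right_mono) simp
    then show ?thesis using hK[OF that(1)] unfolding rk_def by (simp add: algebra_simps)
  qed
  ultimately show ?thesis by blast
qed



definition ltm :: "nat multiset \<Rightarrow> nat multiset \<Rightarrow> bool" where
  "ltm M N \<longleftrightarrow> size M < size N \<or>
     (size M = size N \<and> (\<exists>x. count N x < count M x \<and> (\<forall>y<x. count M y = count N y)))"

lemma ltm_irrefl: "\<not> ltm M M"
  by (auto simp: ltm_def)

lemma ltm_size: "ltm M N \<Longrightarrow> size M \<le> size N"
  by (auto simp: ltm_def)

lemma ltm_trans:
  assumes "ltm K M" "ltm M N" shows "ltm K N"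
proof (cases "size K < size N")
  case True then show ?thesis by (simp add: ltm_def)
next
  case False
  then have s: "size K = size M" "size M = size N" using assms ltm_size by (metis le_antisym le_less_trans not_le)+
  obtain x1 where x1: "count M x1 < count K x1" "\<forall>y<x1. count K y = count M y"
    using assms(1) s by (auto simp: ltm_def)
  obtain x2 where x2: "count N x2 < count M x2" "\<forall>y<x2. count M y = count N y"
    using assms(2) s by (auto simp: ltm_def)
  have "\<exists>x. count N x < count K x \<and> (\<forall>y<x. count K y = count N y)"
  proof (cases x1 x2 rule: linorder_cases)
    case less
    then show ?thesis using x1 x2 by (intro exI[of _ x1]) auto
  next
    case equal
    then show ?thesis using x1 x2 by (intro exI[of _ x1]) auto
  next
    case greater
    then show ?thesis using x1 x2 by (intro exI[of _ x2]) auto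
  qed
  then show ?thesis using s by (simp add: ltm_def)
qed

lemma ltm_total:
  assumes "M \<noteq> N" shows "ltm M N \<or> ltm N M"
proof (cases "size M = size N")
  case False then show ?thesis by (auto simp: ltm_def)
next
  case True
  have "\<exists>x. count M x \<noteq> count N x"
  proof (rule ccontr)
    assume "\<not> (\<exists>x. count M x \<noteq> count N x)"
    then have "M = N" by (intro multiset_eqI) simp
    then show False using assms by simp
  qed
  define x where "x = (LEAST x. count M x \<noteq> count N x)"
  have x: "count M x \<noteq> count N x" unfolding x_def using \<open>\<exists>x. _\<close> by (rule LeastI_ex)
  have y: "count M y = count N y" if "y < x" for y
    using not_less_Least[of y "\<lambda>x. count M x \<noteq> count N x"] that unfolding x_def by blast
  show ?thesis
  proof (cases "count M x < count N x")
    case True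
    then have "ltm N M" using \<open>size M = size N\<close> y unfolding ltm_def
      by (intro disjI2 conjI exI[of _ x]) auto
    then show ?thesis by blast
  next
    case False
    then have "count N x < count M x" using x by simp
    then have "ltm M N" using \<open>size M = size N\<close> y unfolding ltm_def
      by (intro disjI2 conjI exI[of _ x]) auto
    then show ?thesis by blast
  qed
qed

lemma ltm_add_left:
  assumes "ltm M N" shows "ltm (K + M) (K + N)"
proof (cases "size M < size N")
  case True then show ?thesis by (simp add: ltm_def)
next
  case False
  then obtain x where "size M = size N" "count N x < count M x" "\<forall>y<x. count M y = count N y"
    using assms unfolding ltm_def by blast
  then show ?thesis unfolding ltm_def by (intro disjI2 conjI exI[of _ x]) auto
qed

lemma ltm_add_right: "ltm M N \<Longrightarrow> ltm (M + K) (N + K)"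
  using ltm_add_left[of M N K] by (simp add: add.commute)

lemma finite_bounded_msets:
  assumes "finite R" shows "finite {M. set_mset M \<subseteq> R \<and> size M \<le> n}"
proof -
  have "{M. set_mset M \<subseteq> R \<and> size M \<le> n} = (\<Union>s\<le>n. multisets_of_size R s)"
    by (auto simp: multisets_of_size_def)
  then show ?thesis using assms by auto
qed

definition ltm_rel :: "nat set \<Rightarrow> (nat multiset \<times> nat multiset) set" where
  "ltm_rel R = {(M,N). set_mset M \<subseteq> R \<and> set_mset N \<subseteq> R \<and> ltm M N}"

lemma wf_ltm_rel:
  assumes "finite R" shows "wf (ltm_rel R)"
proof -
  define f where "f N = card {M. set_mset M \<subseteq> R \<and> ltm M N}" for N
  have "ltm_rel R \<subseteq> measure f"
  proof
    fix p assume "p \<in> ltm_rel R"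
    then obtain M N where p: "p = (M,N)" "set_mset M \<subseteq> R" "set_mset N \<subseteq> R" "ltm M N"
      by (auto simp: ltm_rel_def)
    have sub: "{K. set_mset K \<subseteq> R \<and> ltm K M} \<subseteq> {K. set_mset K \<subseteq> R \<and> ltm K N}"
      using p ltm_trans by blast
    have "M \<in> {K. set_mset K \<subseteq> R \<and> ltm K N}" "M \<notin> {K. set_mset K \<subseteq> R \<and> ltm K M}"
      using p ltm_irrefl by auto
    then have ps: "{K. set_mset K \<subseteq> R \<and> ltm K M} \<subset> {K. set_mset K \<subseteq> R \<and> ltm K N}"
      using sub by blast
    have "{K. set_mset K \<subseteq> R \<and> ltm K N} \<subseteq> {K. set_mset K \<subseteq> R \<and> size K \<le> size N}"
      using ltm_size by blast
    then have "finite {K. set_mset K \<subseteq> R \<and> ltm K N}"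
      using finite_bounded_msets[OF assms] finite_subset by blast
    then have "f M < f N" unfolding f_def using ps by (rule psubset_card_mono)
    then show "p \<in> measure f" using p by simp
  qed
  then show ?thesis using wf_subset wf_measure by blast
qed



locale qasl =
  fixes sc :: "'k::field \<Rightarrow> 'a::ring_1 \<Rightarrow> 'a"
    and Agr :: "nat \<Rightarrow> 'a set" and Pi :: "'a set" and lst :: "'a \<Rightarrow> 'a \<Rightarrow> bool"
    and rk :: "'a \<Rightarrow> nat"
  assumes Q: "quantum_graded_ASL sc Agr Pi lst"
    and rk_inj: "inj_on rk Pi"
    and rk_lt: "\<And>a b. a \<in> Pi \<Longrightarrow> b \<in> Pi \<Longrightarrow> lst a b \<Longrightarrow> rk a < rk b"
begin

lemma VS: "vector_space sc"
  using Q unfolding quantum_graded_ASL_def graded_k_algebra_def k_algebra_def by blast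

sublocale vector_space sc by (rule VS)

lemma kalg: "\<forall>c x y. sc c (x * y) = sc c x * y \<and> sc c (x * y) = x * sc c y"
  using Q unfolding quantum_graded_ASL_def graded_k_algebra_def k_algebra_def by (elim conjE) assumption

lemma scm: "sc c (x * y) = sc c x * y"
  using kalg by blast

lemma scm2: "sc c (x * y) = x * sc c y"
  using kalg by blast

lemma sc_mid: "u * sc c z * v = sc c (u * z * v)"
  by (metis scm scm2)

lemma finPi: "finite Pi" using Q unfolding quantum_graded_ASL_def by blast
lemma irr: "a \<in> Pi \<Longrightarrow> \<not> lst a a" using Q unfolding quantum_graded_ASL_def by blast
lemma trn: "a \<in> Pi \<Longrightarrow> b \<in> Pi \<Longrightarrow> c \<in> Pi \<Longrightarrow> lst a b \<Longrightarrow> lst b c \<Longrightarrow> lst a c"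
  using Q unfolding quantum_graded_ASL_def by blast
lemma homog: "a \<in> Pi \<Longrightarrow> \<exists>n>0. a \<in> Agr n" using Q unfolding quantum_graded_ASL_def by blast
lemma gen: "span {prod_list xs | xs. set xs \<subseteq> Pi} = UNIV"
  using Q unfolding quantum_graded_ASL_def by blast
lemma injstd: "inj_on prod_list (std_words Pi lst)"
  using Q unfolding quantum_graded_ASL_def by blast
lemma indep: "independent (prod_list ` std_words Pi lst)"
  using Q unfolding quantum_graded_ASL_def by blast
lemma ax4: "a \<in> Pi \<Longrightarrow> b \<in> Pi \<Longrightarrow> a \<noteq> b \<Longrightarrow> \<not> lst a b \<Longrightarrow> \<not> lst b a \<Longrightarrow>
    a * b \<in> span (lower_terms Pi lst a b)"
  using Q unfolding quantum_graded_ASL_def by blast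
lemma ax5: "a \<in> Pi \<Longrightarrow> b \<in> Pi \<Longrightarrow> \<exists>c. c \<noteq> 0 \<and> a * b - sc c (b * a) \<in> span (lower_terms Pi lst a b)"
  using Q unfolding quantum_graded_ASL_def by blast
lemma grad: "graded_k_algebra sc Agr"
  using Q unfolding quantum_graded_ASL_def by blast

definition el :: "nat \<Rightarrow> 'a" where "el = inv_into Pi rk"
definition RK :: "nat set" where "RK = rk ` Pi"
definition mm :: "'a list \<Rightarrow> nat multiset" where "mm w = mset (map rk w)"
definition wd :: "nat multiset \<Rightarrow> 'a list" where "wd M = map el (sorted_list_of_multiset M)"
definition PM :: "nat multiset \<Rightarrow> 'a" where "PM M = prod_list (wd M)"

lemma finRK: "finite RK" unfolding RK_def using finPi by simp

lemma el_rk: "a \<in> Pi \<Longrightarrow> el (rk a) = a"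
  unfolding el_def using rk_inj by (simp add: inv_into_f_f)

lemma rk_el: "x \<in> RK \<Longrightarrow> rk (el x) = x"
  unfolding el_def RK_def by (simp add: f_inv_into_f)

lemma el_in: "x \<in> RK \<Longrightarrow> el x \<in> Pi"
  unfolding el_def RK_def by (simp add: inv_into_into)

lemma rk_in: "a \<in> Pi \<Longrightarrow> rk a \<in> RK" unfolding RK_def by simp

lemma mm_append[simp]: "mm (u @ v) = mm u + mm v" by (simp add: mm_def)
lemma mm_Cons[simp]: "mm (x # v) = add_mset (rk x) (mm v)" by (simp add: mm_def)
lemma mm_Nil[simp]: "mm [] = {#}" by (simp add: mm_def)

lemma mm_set: "set w \<subseteq> Pi \<Longrightarrow> set_mset (mm w) \<subseteq> RK"
  by (auto simp: mm_def RK_def)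

lemma wd_set: "set_mset M \<subseteq> RK \<Longrightarrow> set (wd M) \<subseteq> Pi"
  by (auto simp: wd_def intro: el_in)

lemma wd_mm: "set_mset M \<subseteq> RK \<Longrightarrow> mm (wd M) = M"
proof -
  assume A: "set_mset M \<subseteq> RK"
  have "map rk (map el (sorted_list_of_multiset M)) = sorted_list_of_multiset M"
    using A by (auto intro!: map_idI rk_el)
  then show ?thesis by (simp add: mm_def wd_def)
qed

lemma span_mult:
  assumes "x \<in> span S" shows "u * x * v \<in> span ((\<lambda>s. u * s * v) ` S)"
  using assms
proof (induction rule: span_induct_alt)
  case base then show ?case by (simp add: span_zero)
next
  case (step c x y)
  have "u * (sc c x + y) * v = sc c (u * x * v) + u * y * v"
    by (simp add: distrib_left distrib_right sc_mid)
  moreover have "sc c (u * x * v) \<in> span ((\<lambda>s. u * s * v) ` S)"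
    using step by (intro span_scale span_base) auto
  ultimately show ?case using step by (simp add: span_add)
qed

definition LowW :: "nat multiset \<Rightarrow> 'a set" where
  "LowW N = span {prod_list w | w. set w \<subseteq> Pi \<and> ltm (mm w) N}"

lemma LowW_mono: "M = N \<or> ltm M N \<Longrightarrow> LowW M \<subseteq> LowW N"
  unfolding LowW_def by (rule span_mono) (auto intro: ltm_trans)

lemma ltm_single: "ltm {#x#} {#y, z#}"
  by (simp add: ltm_def)

lemma ltm_pair:
  assumes "l < a" "l < b" "l \<le> m"
  shows "ltm {#l, m#} {#a, b#}"
proof -
  have "count {#a, b#} l < count {#l, m#} l" using assms by simp
  moreover have "\<forall>y<l. count {#l, m#} y = count {#a, b#} y" using assms by auto
  ultimately show ?thesis unfolding ltm_def by (intro disjI2 conjI exI[of _ l]) auto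
qed

lemma ctx_low:
  assumes ab: "a \<in> Pi" "b \<in> Pi" and x: "x \<in> span (lower_terms Pi lst a b)"
    and u: "set u \<subseteq> Pi" and u': "set u' \<subseteq> Pi"
  shows "prod_list u * x * prod_list u' \<in> LowW (mm (u @ a # b # u'))"
proof -
  have "prod_list u * x * prod_list u' \<in> span ((\<lambda>s. prod_list u * s * prod_list u') ` lower_terms Pi lst a b)"
    using x by (rule span_mult)
  moreover have "(\<lambda>s. prod_list u * s * prod_list u') ` lower_terms Pi lst a b \<subseteq>
      {prod_list w | w. set w \<subseteq> Pi \<and> ltm (mm w) (mm (u @ a # b # u'))}"
  proof
    fix t assume "t \<in> (\<lambda>s. prod_list u * s * prod_list u') ` lower_terms Pi lst a b"
    then obtain s where s: "s \<in> lower_terms Pi lst a b" "t = prod_list u * s * prod_list u'" by blast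
    have tgt: "mm (u @ a # b # u') = mm u + {#rk a, rk b#} + mm u'" by simp
    show "t \<in> {prod_list w | w. set w \<subseteq> Pi \<and> ltm (mm w) (mm (u @ a # b # u'))}"
    proof (cases "s \<in> Pi \<and> lst s a \<and> lst s b")
      case True
      have "t = prod_list (u @ s # u')" using s by (simp add: mult.assoc)
      moreover have "ltm (mm (u @ s # u')) (mm (u @ a # b # u'))"
      proof -
        have "ltm {#rk s#} {#rk a, rk b#}" by (rule ltm_single)
        then have "ltm (mm u + {#rk s#} + mm u') (mm u + {#rk a, rk b#} + mm u')"
          by (intro ltm_add_right ltm_add_left)
        then show ?thesis by simp
      qed
      moreover have "set (u @ s # u') \<subseteq> Pi" using True u u' by auto
      ultimately show ?thesis by blast
    next
      case False
      then obtain l m where lm: "s = l * m" "l \<in> Pi" "m \<in> Pi" "lst l m \<or> l = m" "lst l a" "lst l b"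
        using s(1) unfolding lower_terms_def by blast
      have "t = prod_list (u @ l # m # u')" using s lm by (simp add: mult.assoc)
      moreover have "ltm (mm (u @ l # m # u')) (mm (u @ a # b # u'))"
      proof -
        have "rk l < rk a" "rk l < rk b" using lm ab rk_lt by auto
        moreover have "rk l \<le> rk m" using lm rk_lt by (metis less_imp_le order_refl)
        ultimately have "ltm {#rk l, rk m#} {#rk a, rk b#}" by (rule ltm_pair)
        then have "ltm (mm u + {#rk l, rk m#} + mm u') (mm u + {#rk a, rk b#} + mm u')"
          by (intro ltm_add_right ltm_add_left)
        then show ?thesis by simp
      qed
      moreover have "set (u @ l # m # u') \<subseteq> Pi" using lm u u' by auto
      ultimately show ?thesis by blast
    qed
  qed
  ultimately show ?thesis unfolding LowW_def using span_mono by blast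
qed

lemma swap_low:
  assumes ab: "a \<in> Pi" "b \<in> Pi" and u: "set u \<subseteq> Pi" and u': "set u' \<subseteq> Pi"
  shows "\<exists>c. c \<noteq> 0 \<and> prod_list (u @ a # b # u') - sc c (prod_list (u @ b # a # u')) \<in> LowW (mm (u @ a # b # u'))"
proof -
  obtain c where c: "c \<noteq> 0" "a * b - sc c (b * a) \<in> span (lower_terms Pi lst a b)" using ax5[OF ab] by blast
  have "prod_list u * (a * b - sc c (b * a)) * prod_list u' \<in> LowW (mm (u @ a # b # u'))"
    by (rule ctx_low[OF ab c(2) u u'])
  moreover have "prod_list u * (a * b - sc c (b * a)) * prod_list u' =
      prod_list (u @ a # b # u') - sc c (prod_list (u @ b # a # u'))"
  proof -
    have "prod_list u * (a * b - sc c (b * a)) * prod_list u' =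
      prod_list u * (a * b) * prod_list u' - prod_list u * sc c (b * a) * prod_list u'"
      by (simp add: left_diff_distrib right_diff_distrib)
    also have "\<dots> = prod_list u * (a * b) * prod_list u' - sc c (prod_list u * (b * a) * prod_list u')"
      by (simp only: sc_mid)
    also have "\<dots> = prod_list (u @ a # b # u') - sc c (prod_list (u @ b # a # u'))"
      by (simp add: mult.assoc)
    finally show ?thesis .
  qed
  ultimately show ?thesis using c(1) by auto
qed

lemma incomp_low:
  assumes ab: "a \<in> Pi" "b \<in> Pi" "a \<noteq> b" "\<not> lst a b" "\<not> lst b a"
    and u: "set u \<subseteq> Pi" and u': "set u' \<subseteq> Pi"
  shows "prod_list (u @ a # b # u') \<in> LowW (mm (u @ a # b # u'))"
proof -
  have "prod_list u * (a * b) * prod_list u' \<in> LowW (mm (u @ a # b # u'))"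
    by (rule ctx_low[OF ab(1,2) ax4[OF ab] u u'])
  then show ?thesis by (simp add: mult.assoc)
qed

lemma LowW_left:
  assumes u: "set u \<subseteq> Pi" and x: "x \<in> LowW M"
  shows "prod_list u * x \<in> LowW (mm u + M)"
proof -
  have "prod_list u * x * 1 \<in> span ((\<lambda>s. prod_list u * s * 1) ` {prod_list w | w. set w \<subseteq> Pi \<and> ltm (mm w) M})"
    using x unfolding LowW_def by (rule span_mult)
  moreover have B: "(\<lambda>s. prod_list u * s * 1) ` {prod_list w | w. set w \<subseteq> Pi \<and> ltm (mm w) M} \<subseteq>
     {prod_list w | w. set w \<subseteq> Pi \<and> ltm (mm w) (mm u + M)}"
  proof
    fix t assume "t \<in> (\<lambda>s. prod_list u * s * 1) ` {prod_list w | w. set w \<subseteq> Pi \<and> ltm (mm w) M}"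
    then obtain w where w: "set w \<subseteq> Pi" "ltm (mm w) M" "t = prod_list u * prod_list w" by auto
    then have "t = prod_list (u @ w)" "set (u @ w) \<subseteq> Pi" "ltm (mm (u @ w)) (mm u + M)"
      using u by (auto intro: ltm_add_left)
    then show "t \<in> {prod_list w | w. set w \<subseteq> Pi \<and> ltm (mm w) (mm u + M)}" by blast
  qed
  ultimately have "prod_list u * x * 1 \<in> span {prod_list w | w. set w \<subseteq> Pi \<and> ltm (mm w) (mm u + M)}"
    using span_mono[OF B] by blast
  then show ?thesis unfolding LowW_def by simp
qed

definition eqv :: "nat multiset \<Rightarrow> 'a \<Rightarrow> 'a \<Rightarrow> bool" where
  "eqv N x y \<longleftrightarrow> (\<exists>c. c \<noteq> 0 \<and> x - sc c y \<in> LowW N)"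

lemma eqv_refl: "eqv N x x"
  unfolding eqv_def by (intro exI[of _ 1]) (simp add: LowW_def span_zero)

lemma eqv_sym: assumes "eqv N x y" shows "eqv N y x"
proof -
  obtain c where c: "c \<noteq> 0" "x - sc c y \<in> LowW N" using assms unfolding eqv_def by blast
  have "sc (- inverse c) (x - sc c y) \<in> LowW N" using c(2) unfolding LowW_def by (rule span_scale)
  moreover have "sc (- inverse c) (x - sc c y) = y - sc (inverse c) x"
    using c(1) by (simp add: scale_right_diff_distrib scale_minus_left)
  ultimately show ?thesis using c(1) unfolding eqv_def by (intro exI[of _ "inverse c"]) auto
qed

lemma eqv_trans: assumes "eqv N x y" "eqv N y z" shows "eqv N x z"
proof -
  obtain c where c: "c \<noteq> 0" "x - sc c y \<in> LowW N" using assms unfolding eqv_def by blast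
  obtain d where d: "d \<noteq> 0" "y - sc d z \<in> LowW N" using assms unfolding eqv_def by blast
  have "(x - sc c y) + sc c (y - sc d z) \<in> LowW N" using c d unfolding LowW_def
    by (intro span_add span_scale)
  moreover have "(x - sc c y) + sc c (y - sc d z) = x - sc (c * d) z"
    by (simp add: scale_right_diff_distrib)
  ultimately show ?thesis using c d unfolding eqv_def by (intro exI[of _ "c * d"]) auto
qed

lemma eqv_left: assumes u: "set u \<subseteq> Pi" and "eqv N x y"
  shows "eqv (mm u + N) (prod_list u * x) (prod_list u * y)"
proof -
  obtain c where c: "c \<noteq> 0" "x - sc c y \<in> LowW N" using assms unfolding eqv_def by blast
  have "prod_list u * (x - sc c y) \<in> LowW (mm u + N)" using LowW_left[OF u c(2)] .
  moreover have "prod_list u * (x - sc c y) = prod_list u * x - sc c (prod_list u * y)"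
    by (simp add: algebra_simps scm2)
  ultimately show ?thesis using c unfolding eqv_def by auto
qed

lemma move_front:
  assumes "set (u @ p @ x # q) \<subseteq> Pi"
  shows "eqv (mm (u @ p @ x # q)) (prod_list (u @ p @ x # q)) (prod_list (u @ x # p @ q))"
  using assms
proof (induction p arbitrary: u)
  case Nil then show ?case by (simp add: eqv_refl)
next
  case (Cons y p)
  have IH: "eqv (mm ((u @ [y]) @ p @ x # q)) (prod_list ((u @ [y]) @ p @ x # q)) (prod_list ((u @ [y]) @ x # p @ q))"
    using Cons by (intro Cons.IH) auto
  obtain c where c: "c \<noteq> 0" "prod_list (u @ y # x # p @ q) - sc c (prod_list (u @ x # y # p @ q)) \<in> LowW (mm (u @ y # x # p @ q))"
    using swap_low[of y x u "p @ q"] Cons.prems by auto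
  have "mm (u @ y # x # p @ q) = mm (u @ (y # p) @ x # q)" by simp
  then have "eqv (mm (u @ (y # p) @ x # q)) (prod_list (u @ y # x # p @ q)) (prod_list (u @ x # y # p @ q))"
    using c unfolding eqv_def by metis
  moreover have "eqv (mm (u @ (y # p) @ x # q)) (prod_list (u @ (y # p) @ x # q)) (prod_list (u @ y # x # p @ q))"
    using IH by simp
  ultimately show ?case using eqv_trans by simp
qed

lemma perm_eqv:
  assumes "set w \<subseteq> Pi" "set w' \<subseteq> Pi" "mm w = mm w'"
  shows "eqv (mm w) (prod_list w) (prod_list w')"
  using assms
proof (induction w arbitrary: w')
  case Nil
  then have "w' = []" by (simp add: mm_def)
  then show ?case by (simp add: eqv_refl)
next
  case (Cons x v)
  have "rk x \<in># mm w'" using Cons.prems(3) by (metis mm_Cons union_single_eq_member)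
  then obtain x' where x': "x' \<in> set w'" "rk x' = rk x" by (auto simp: mm_def)
  then have "x' = x" using Cons.prems rk_inj by (auto simp: inj_on_def)
  then obtain p q where pq: "w' = p @ x # q" using x' split_list by metis
  have mv: "mm v = mm (p @ q)" using Cons.prems(3) pq by simp
  have "eqv (mm v) (prod_list v) (prod_list (p @ q))"
    using Cons pq mv by (intro Cons.IH) auto
  then have "eqv (mm [x] + mm v) (prod_list [x] * prod_list v) (prod_list [x] * prod_list (p @ q))"
    using Cons.prems by (intro eqv_left) auto
  then have A: "eqv (mm (x # v)) (prod_list (x # v)) (prod_list (x # p @ q))" by simp
  have "eqv (mm ([] @ p @ x # q)) (prod_list ([] @ p @ x # q)) (prod_list ([] @ x # p @ q))"
    using Cons.prems pq by (intro move_front) auto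
  then have "eqv (mm (x # v)) (prod_list w') (prod_list (x # p @ q))"
    using pq Cons.prems(3) by simp
  then show ?case using A eqv_sym eqv_trans by blast
qed

end



context qasl
begin

definition chainm :: "nat multiset \<Rightarrow> bool" where
  "chainm M \<longleftrightarrow> set_mset M \<subseteq> RK \<and>
     (\<forall>x\<in>#M. \<forall>y\<in>#M. x = y \<or> lst (el x) (el y) \<or> lst (el y) (el x))"

definition LowC :: "nat multiset \<Rightarrow> 'a set" where
  "LowC N = span (PM ` {K. chainm K \<and> ltm K N})"

definition SpanC :: "nat multiset \<Rightarrow> 'a set" where
  "SpanC N = span (PM ` {K. chainm K \<and> (K = N \<or> ltm K N)})"

lemma LowC_mono: "M = N \<or> ltm M N \<Longrightarrow> LowC M \<subseteq> LowC N"
  unfolding LowC_def by (rule span_mono) (auto intro: ltm_trans)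

lemma LowC_SpanC: "LowC N \<subseteq> SpanC N"
  unfolding LowC_def SpanC_def by (rule span_mono) auto

lemma PM_SpanC: "chainm N \<Longrightarrow> PM N \<in> SpanC N"
  unfolding SpanC_def by (rule span_base) auto

lemma SpanC_LowC: "ltm N N' \<Longrightarrow> SpanC N \<subseteq> LowC N'"
  unfolding LowC_def SpanC_def by (rule span_mono) (auto intro: ltm_trans)

lemma straight_aux:
  assumes "set_mset N \<subseteq> RK"
  shows "\<forall>w. set w \<subseteq> Pi \<and> mm w = N \<longrightarrow>
    (chainm N \<longrightarrow> (\<exists>c. c \<noteq> 0 \<and> prod_list w - sc c (PM N) \<in> LowC N)) \<and>
    (\<not> chainm N \<longrightarrow> prod_list w \<in> LowC N)"
  using assms
proof (induction N rule: wf_induct_rule[OF wf_ltm_rel[OF finRK]])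
  case (1 N)
  have WC: "LowW N \<subseteq> LowC N"
    unfolding LowW_def
  proof (rule span_minimal)
    show "subspace (LowC N)" unfolding LowC_def by simp
    show "{prod_list w |w. set w \<subseteq> Pi \<and> ltm (mm w) N} \<subseteq> LowC N"
    proof
      fix t assume "t \<in> {prod_list w |w. set w \<subseteq> Pi \<and> ltm (mm w) N}"
      then obtain v where v: "t = prod_list v" "set v \<subseteq> Pi" "ltm (mm v) N" by blast
      have K: "set_mset (mm v) \<subseteq> RK" using v(2) by (rule mm_set)
      then have rel: "(mm v, N) \<in> ltm_rel RK" using v(3) 1(2) by (simp add: ltm_rel_def)
      have IH: "(chainm (mm v) \<longrightarrow> (\<exists>c. c \<noteq> 0 \<and> prod_list v - sc c (PM (mm v)) \<in> LowC (mm v))) \<and>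
          (\<not> chainm (mm v) \<longrightarrow> prod_list v \<in> LowC (mm v))"
        using 1(1)[OF rel K] v(2) by blast
      have sub: "LowC (mm v) \<subseteq> LowC N" using v(3) by (intro LowC_mono) simp
      show "t \<in> LowC N"
      proof (cases "chainm (mm v)")
        case True
        then obtain c where c: "prod_list v - sc c (PM (mm v)) \<in> LowC (mm v)" using IH by blast
        have "PM (mm v) \<in> LowC N" unfolding LowC_def using True v(3) by (intro span_base) auto
        then have "sc c (PM (mm v)) \<in> LowC N" unfolding LowC_def by (rule span_scale)
        moreover have "prod_list v - sc c (PM (mm v)) \<in> LowC N" using c sub by blast
        ultimately have "(prod_list v - sc c (PM (mm v))) + sc c (PM (mm v)) \<in> LowC N"
          unfolding LowC_def by (rule span_add[rotated])
        then show ?thesis using v(1) by simp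
      next
        case False
        then show ?thesis using IH sub v(1) by blast
      qed
    qed
  qed
  show ?case
  proof (intro allI impI conjI)
    fix w assume w: "set w \<subseteq> Pi \<and> mm w = N"
    {
      assume ch: "chainm N"
      have "set (wd N) \<subseteq> Pi" "mm (wd N) = N" using 1(2) by (rule wd_set, rule wd_mm)
      then have "eqv (mm w) (prod_list w) (prod_list (wd N))" using w by (intro perm_eqv) auto
      then obtain c where "c \<noteq> 0" "prod_list w - sc c (PM N) \<in> LowW N"
        using w unfolding eqv_def PM_def by blast
      then show "\<exists>c. c \<noteq> 0 \<and> prod_list w - sc c (PM N) \<in> LowC N" using WC by blast
    }
    {
      assume nch: "\<not> chainm N"
      then obtain x y where xy: "x \<in># N" "y \<in># N" "x \<noteq> y" "\<not> lst (el x) (el y)" "\<not> lst (el y) (el x)"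
        using 1(2) unfolding chainm_def by blast
      have xR: "x \<in> RK" "y \<in> RK" using xy 1(2) by auto
      define a where "a = el x"
      define b where "b = el y"
      have ab: "a \<in> Pi" "b \<in> Pi" using xR by (auto simp: a_def b_def el_in)
      have "a \<noteq> b" using xy(3) xR rk_el unfolding a_def b_def by metis
      define rest where "rest = wd (N - {#x, y#})"
      have restP: "set rest \<subseteq> Pi" unfolding rest_def using 1(2)
        by (intro wd_set) (meson in_diffD subset_iff)
      have "set_mset (N - {#x, y#}) \<subseteq> RK" using 1(2) by (meson in_diffD subset_iff)
      then have mrest: "mm rest = N - {#x, y#}" unfolding rest_def by (rule wd_mm)
      have "y \<in># N - {#x#}" using xy by (simp add: in_diff_count not_in_iff[symmetric])
      then have sub: "{#x, y#} \<subseteq># N" using xy(1) by (simp add: insert_subset_eq_iff)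
      have mw': "mm (a # b # rest) = N"
      proof -
        have "mm (a # b # rest) = {#x, y#} + (N - {#x, y#})"
          using mrest xR by (simp add: a_def b_def rk_el)
        also have "\<dots> = N" using sub by (rule subset_mset.add_diff_inverse)
        finally show ?thesis .
      qed
      have "prod_list ([] @ a # b # rest) \<in> LowW (mm ([] @ a # b # rest))"
        using ab \<open>a \<noteq> b\<close> xy(4,5) restP unfolding a_def b_def by (intro incomp_low) auto
      then have low': "prod_list (a # b # rest) \<in> LowW N" using mw' by simp
      have "eqv (mm w) (prod_list w) (prod_list (a # b # rest))"
        using w ab restP mw' by (intro perm_eqv) auto
      then obtain c where c: "prod_list w - sc c (prod_list (a # b # rest)) \<in> LowW N"
        using w unfolding eqv_def by blast
      have "sc c (prod_list (a # b # rest)) \<in> LowW N" using low' unfolding LowW_def by (rule span_scale)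
      then have "(prod_list w - sc c (prod_list (a # b # rest))) + sc c (prod_list (a # b # rest)) \<in> LowW N"
        using c unfolding LowW_def by (intro span_add)
      then show "prod_list w \<in> LowC N" using WC by auto
    }
  qed
qed

lemma word_chain:
  assumes "set w \<subseteq> Pi" "chainm (mm w)"
  shows "\<exists>c. c \<noteq> 0 \<and> prod_list w - sc c (PM (mm w)) \<in> LowC (mm w)"
  using straight_aux[OF mm_set[OF assms(1)]] assms by blast

lemma word_nonchain:
  assumes "set w \<subseteq> Pi" "\<not> chainm (mm w)"
  shows "prod_list w \<in> LowC (mm w)"
  using straight_aux[OF mm_set[OF assms(1)]] assms by blast

lemma word_SpanC:
  assumes "set w \<subseteq> Pi"
  shows "prod_list w \<in> SpanC (mm w)"
proof (cases "chainm (mm w)")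
  case True
  then obtain c where c: "prod_list w - sc c (PM (mm w)) \<in> LowC (mm w)" using word_chain assms by blast
  then have "prod_list w - sc c (PM (mm w)) \<in> SpanC (mm w)" using LowC_SpanC by blast
  moreover have "sc c (PM (mm w)) \<in> SpanC (mm w)" using PM_SpanC[OF True] unfolding SpanC_def by (rule span_scale)
  ultimately have "(prod_list w - sc c (PM (mm w))) + sc c (PM (mm w)) \<in> SpanC (mm w)"
    unfolding SpanC_def by (rule span_add)
  then show ?thesis by simp
next
  case False
  then show ?thesis using word_nonchain[OF assms] LowC_SpanC by blast
qed

end



context qasl
begin

lemma chainm_RK: "chainm N \<Longrightarrow> set_mset N \<subseteq> RK" by (simp add: chainm_def)

lemma chainm_sub: assumes "chainm N" "M \<subseteq># N" shows "chainm M"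
proof -
  have "set_mset M \<subseteq> set_mset N" using assms(2) by (rule set_mset_mono)
  then show ?thesis using assms(1) unfolding chainm_def by blast
qed

lemma wd_std: assumes "chainm M" shows "wd M \<in> std_words Pi lst"
proof -
  have RKM: "set_mset M \<subseteq> RK" using assms by (rule chainm_RK)
  have "sorted_wrt (\<lambda>x y. lst (el x) (el y) \<or> el x = el y) (sorted_list_of_multiset M)"
  proof (rule sorted_wrt_mono_rel[OF _ sorted_sorted_list_of_multiset])
    fix x y assume xy: "x \<in> set (sorted_list_of_multiset M)" "y \<in> set (sorted_list_of_multiset M)" "x \<le> y"
    then have xy': "x \<in># M" "y \<in># M" by auto
    then have xR: "x \<in> RK" "y \<in> RK" using RKM by auto
    show "lst (el x) (el y) \<or> el x = el y"
    proof (cases "x = y")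
      case True then show ?thesis by simp
    next
      case False
      have "\<not> lst (el y) (el x)"
      proof
        assume "lst (el y) (el x)"
        then have "rk (el y) < rk (el x)" using xR by (intro rk_lt) (auto intro: el_in)
        then show False using xR xy(3) by (simp add: rk_el)
      qed
      then show ?thesis using assms xy' False unfolding chainm_def by blast
    qed
  qed
  then have "sorted_wrt (\<lambda>a b. lst a b \<or> a = b) (wd M)" by (simp add: wd_def sorted_wrt_map)
  moreover have "set (wd M) \<subseteq> Pi" using RKM by (rule wd_set)
  ultimately show ?thesis by (simp add: std_words_def)
qed

lemma PM_inj: assumes "chainm M" "chainm M'" "PM M = PM M'" shows "M = M'"
proof -
  have "wd M = wd M'" using injstd wd_std[OF assms(1)] wd_std[OF assms(2)] assms(3)
    unfolding PM_def inj_on_def by blast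
  then have "mm (wd M) = mm (wd M')" by simp
  then show ?thesis using wd_mm chainm_RK assms(1,2) by metis
qed

definition QB :: "'a set" where "QB = PM ` {K. chainm K}"

lemma indepQ: "independent QB"
proof -
  have "QB \<subseteq> prod_list ` std_words Pi lst" unfolding QB_def PM_def using wd_std by blast
  then show ?thesis using indep independent_mono by blast
qed

lemma PM_notin_LowC: assumes ch: "chainm N" shows "PM N \<notin> LowC N"
proof
  assume A: "PM N \<in> LowC N"
  have "PM ` {K. chainm K \<and> ltm K N} \<subseteq> QB - {PM N}"
  proof
    fix t assume "t \<in> PM ` {K. chainm K \<and> ltm K N}"
    then obtain K where K: "t = PM K" "chainm K" "ltm K N" by blast
    have "PM K \<noteq> PM N" using PM_inj[OF K(2) ch] K(3) ltm_irrefl by metis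
    then show "t \<in> QB - {PM N}" using K unfolding QB_def by auto
  qed
  then have "PM N \<in> span (QB - {PM N})" using A unfolding LowC_def using span_mono by blast
  moreover have "PM N \<in> QB" using ch unfolding QB_def by blast
  ultimately have "dependent QB" unfolding dependent_def by blast
  then show False using indepQ by blast
qed

definition lead :: "'a \<Rightarrow> nat multiset \<Rightarrow> bool" where
  "lead x N \<longleftrightarrow> chainm N \<and> (\<exists>c. c \<noteq> 0 \<and> x - sc c (PM N) \<in> LowC N)"

lemma lead_notin_LowC: assumes "lead x N" shows "x \<notin> LowC N"
proof
  assume x: "x \<in> LowC N"
  obtain c where c: "chainm N" "c \<noteq> 0" "x - sc c (PM N) \<in> LowC N" using assms unfolding lead_def by blast
  have "x - (x - sc c (PM N)) \<in> LowC N" using x c(3) unfolding LowC_def by (rule span_diff)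
  then have "sc c (PM N) \<in> LowC N" by simp
  then have "sc (inverse c) (sc c (PM N)) \<in> LowC N" unfolding LowC_def by (rule span_scale)
  then have "PM N \<in> LowC N" using c(2) by simp
  then show False using PM_notin_LowC c(1) by blast
qed

lemma lead_SpanC: assumes "lead x N" shows "x \<in> SpanC N"
proof -
  obtain c where c: "chainm N" "x - sc c (PM N) \<in> LowC N" using assms unfolding lead_def by blast
  have "x - sc c (PM N) \<in> SpanC N" using c(2) LowC_SpanC by blast
  moreover have "sc c (PM N) \<in> SpanC N" using PM_SpanC[OF c(1)] unfolding SpanC_def by (rule span_scale)
  ultimately have "(x - sc c (PM N)) + sc c (PM N) \<in> SpanC N" unfolding SpanC_def by (rule span_add)
  then show ?thesis by simp
qed

lemma lead_le: assumes "lead x N'" "x \<in> SpanC N" shows "N' = N \<or> ltm N' N"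
proof (rule ccontr)
  assume "\<not> (N' = N \<or> ltm N' N)"
  then have "ltm N N'" using ltm_total by blast
  then have "x \<in> LowC N'" using SpanC_LowC assms(2) by blast
  then show False using lead_notin_LowC assms(1) by blast
qed

lemma lead_lt: assumes "lead x N'" "x \<in> LowC N" shows "ltm N' N"
proof -
  have "N' = N \<or> ltm N' N" using lead_le assms LowC_SpanC by blast
  moreover have "N' \<noteq> N" using lead_notin_LowC assms by blast
  ultimately show ?thesis by blast
qed

lemma PM_in_SpanC: "chainm K \<Longrightarrow> K = N \<or> ltm K N \<Longrightarrow> PM K \<in> SpanC N"
  unfolding SpanC_def by (rule span_base) auto

lemma span_to_SpanC:
  assumes "x \<in> span (PM ` S)" "S \<subseteq> {K. chainm K}"
  shows "x = 0 \<or> (\<exists>K\<in>S. x \<in> SpanC K)"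
  using assms(1)
proof (induction rule: span_induct_alt)
  case base then show ?case by simp
next
  case (step c z y)
  then obtain K where K: "K \<in> S" "z = PM K" by blast
  have chK: "chainm K" using K assms(2) by blast
  have zK: "sc c z \<in> SpanC K" using PM_in_SpanC[OF chK] K unfolding SpanC_def by (intro span_scale) auto
  show ?case
  proof (cases "y = 0")
    case True then show ?thesis using zK K by auto
  next
    case False
    then obtain K' where K': "K' \<in> S" "y \<in> SpanC K'" using step by blast
    show ?thesis
    proof (cases "K = K' \<or> ltm K K'")
      case True
      then have "sc c z \<in> SpanC K'" using PM_in_SpanC[OF chK] K unfolding SpanC_def by (intro span_scale) auto
      then have "sc c z + y \<in> SpanC K'" using K' unfolding SpanC_def by (intro span_add)
      then show ?thesis using K' by blast
    next
      case False
      then have "ltm K' K" using ltm_total by blast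
      then have "y \<in> SpanC K" using K'(2) SpanC_LowC LowC_SpanC by blast
      then have "sc c z + y \<in> SpanC K" using zK unfolding SpanC_def by (intro span_add)
      then show ?thesis using K by blast
    qed
  qed
qed

lemma lead_exists_aux:
  assumes "set_mset N \<subseteq> RK"
  shows "\<forall>x\<in>SpanC N. x \<noteq> 0 \<longrightarrow> (\<exists>N'. lead x N')"
  using assms
proof (induction N rule: wf_induct_rule[OF wf_ltm_rel[OF finRK]])
  case (1 N)
  show ?case
  proof (intro ballI impI)
    fix x assume x: "x \<in> SpanC N" "x \<noteq> 0"
    have low_case: "\<exists>N'. lead x N'" if xl: "x \<in> LowC N"
    proof -
      have "x \<in> span (PM ` {K. chainm K \<and> ltm K N})" using xl unfolding LowC_def .
      then have "x = 0 \<or> (\<exists>K\<in>{K. chainm K \<and> ltm K N}. x \<in> SpanC K)"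
        by (rule span_to_SpanC) auto
      then obtain K where K: "chainm K" "ltm K N" "x \<in> SpanC K" using x(2) by blast
      have "(K, N) \<in> ltm_rel RK" using K 1(2) chainm_RK by (auto simp: ltm_rel_def)
      then show ?thesis using 1(1) K chainm_RK x(2) by blast
    qed
    show "\<exists>N'. lead x N'"
    proof (cases "chainm N")
      case True
      have "PM ` {K. chainm K \<and> (K = N \<or> ltm K N)} = insert (PM N) (PM ` {K. chainm K \<and> ltm K N})"
        using True by auto
      then have "x \<in> span (insert (PM N) (PM ` {K. chainm K \<and> ltm K N}))"
        using x(1) unfolding SpanC_def by simp
      then obtain k where k: "x - sc k (PM N) \<in> LowC N" unfolding LowC_def using span_breakdown_eq by blast
      show ?thesis
      proof (cases "k = 0")
        case True
        then show ?thesis using k low_case by simp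
      next
        case False
        then have "lead x N" using k \<open>chainm N\<close> unfolding lead_def by blast
        then show ?thesis by blast
      qed
    next
      case False
      then have "PM ` {K. chainm K \<and> (K = N \<or> ltm K N)} = PM ` {K. chainm K \<and> ltm K N}" by auto
      then have "x \<in> LowC N" using x(1) unfolding SpanC_def LowC_def by simp
      then show ?thesis by (rule low_case)
    qed
  qed
qed

lemma spanQ: "span QB = UNIV"
proof -
  have "{prod_list xs | xs. set xs \<subseteq> Pi} \<subseteq> span QB"
  proof
    fix t assume "t \<in> {prod_list xs | xs. set xs \<subseteq> Pi}"
    then obtain w where w: "t = prod_list w" "set w \<subseteq> Pi" by blast
    have "SpanC (mm w) \<subseteq> span QB" unfolding SpanC_def QB_def by (rule span_mono) blast
    then show "t \<in> span QB" using word_SpanC[OF w(2)] w(1) by blast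
  qed
  then have "span {prod_list xs | xs. set xs \<subseteq> Pi} \<subseteq> span QB"
    by (rule span_minimal) simp
  then show ?thesis using gen by blast
qed

lemma lead_exists: assumes "x \<noteq> 0" shows "\<exists>N. lead x N"
proof -
  have "x \<in> span (PM ` {K. chainm K})" using spanQ unfolding QB_def by blast
  then have "x = 0 \<or> (\<exists>K\<in>{K. chainm K}. x \<in> SpanC K)" by (rule span_to_SpanC) simp
  then obtain K where "chainm K" "x \<in> SpanC K" using assms by blast
  then show ?thesis using lead_exists_aux[OF chainm_RK] assms by blast
qed

end



context qasl
begin

lemma LowC_sub: "subspace (LowC N)" unfolding LowC_def by simp

lemma LowC_mult_left:
  assumes M: "chainm M" and y: "y \<in> LowC N"
  shows "PM M * y \<in> LowC (M + N)"
proof -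
  have "PM M * y * 1 \<in> span ((\<lambda>s. PM M * s * 1) ` (PM ` {K. chainm K \<and> ltm K N}))"
    using y unfolding LowC_def by (rule span_mult)
  moreover have "(\<lambda>s. PM M * s * 1) ` (PM ` {K. chainm K \<and> ltm K N}) \<subseteq> LowC (M + N)"
  proof
    fix t assume "t \<in> (\<lambda>s. PM M * s * 1) ` (PM ` {K. chainm K \<and> ltm K N})"
    then obtain K where K: "t = PM M * PM K" "chainm K" "ltm K N" by auto
    have w: "set (wd M @ wd K) \<subseteq> Pi" using M K(2) chainm_RK wd_set by auto
    have "mm (wd M @ wd K) = M + K" using M K(2) chainm_RK wd_mm by auto
    moreover have "t = prod_list (wd M @ wd K)" using K(1) by (simp add: PM_def)
    ultimately have "t \<in> SpanC (M + K)" using word_SpanC[OF w] by simp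
    moreover have "ltm (M + K) (M + N)" using K(3) by (rule ltm_add_left)
    ultimately show "t \<in> LowC (M + N)" using SpanC_LowC by blast
  qed
  ultimately have "PM M * y * 1 \<in> LowC (M + N)" using span_minimal[OF _ LowC_sub] by blast
  then show ?thesis by simp
qed

lemma LowC_mult_right:
  assumes M: "chainm M" and y: "y \<in> LowC N"
  shows "y * PM M \<in> LowC (N + M)"
proof -
  have "1 * y * PM M \<in> span ((\<lambda>s. 1 * s * PM M) ` (PM ` {K. chainm K \<and> ltm K N}))"
    using y unfolding LowC_def by (rule span_mult)
  moreover have "(\<lambda>s. 1 * s * PM M) ` (PM ` {K. chainm K \<and> ltm K N}) \<subseteq> LowC (N + M)"
  proof
    fix t assume "t \<in> (\<lambda>s. 1 * s * PM M) ` (PM ` {K. chainm K \<and> ltm K N})"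
    then obtain K where K: "t = PM K * PM M" "chainm K" "ltm K N" by auto
    have w: "set (wd K @ wd M) \<subseteq> Pi" using M K(2) chainm_RK wd_set by auto
    have "mm (wd K @ wd M) = K + M" using M K(2) chainm_RK wd_mm by auto
    moreover have "t = prod_list (wd K @ wd M)" using K(1) by (simp add: PM_def)
    ultimately have "t \<in> SpanC (K + M)" using word_SpanC[OF w] by simp
    moreover have "ltm (K + M) (N + M)" using K(3) by (rule ltm_add_right)
    ultimately show "t \<in> LowC (N + M)" using SpanC_LowC by blast
  qed
  ultimately have "1 * y * PM M \<in> LowC (N + M)" using span_minimal[OF _ LowC_sub] by blast
  then show ?thesis by simp
qed

lemma lead_mult_left:
  assumes x: "lead x N" and M: "chainm M" and MN: "chainm (M + N)"
  shows "lead (PM M * x) (M + N)"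
proof -
  obtain c where c: "chainm N" "c \<noteq> 0" "x - sc c (PM N) \<in> LowC N" using x unfolding lead_def by blast
  have w: "set (wd M @ wd N) \<subseteq> Pi" using M c(1) chainm_RK wd_set by auto
  have mw: "mm (wd M @ wd N) = M + N" using M c(1) chainm_RK wd_mm by auto
  obtain c2 where c2: "c2 \<noteq> 0" "prod_list (wd M @ wd N) - sc c2 (PM (M + N)) \<in> LowC (M + N)"
    using word_chain[OF w] MN mw by auto
  have A: "PM M * PM N - sc c2 (PM (M + N)) \<in> LowC (M + N)" using c2(2) by (simp add: PM_def)
  have B: "PM M * (x - sc c (PM N)) \<in> LowC (M + N)" using LowC_mult_left[OF M c(3)] .
  have "PM M * (x - sc c (PM N)) + sc c (PM M * PM N - sc c2 (PM (M + N))) \<in> LowC (M + N)"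
    using A B unfolding LowC_def by (intro span_add span_scale)
  moreover have "PM M * (x - sc c (PM N)) + sc c (PM M * PM N - sc c2 (PM (M + N))) =
      PM M * x - sc (c * c2) (PM (M + N))"
    by (simp add: right_diff_distrib scale_right_diff_distrib scm2)
  ultimately show ?thesis using MN c c2 unfolding lead_def by (intro conjI exI[of _ "c * c2"]) auto
qed

lemma lead_mult_right:
  assumes x: "lead x N" and M: "chainm M" and NM: "chainm (N + M)"
  shows "lead (x * PM M) (N + M)"
proof -
  obtain c where c: "chainm N" "c \<noteq> 0" "x - sc c (PM N) \<in> LowC N" using x unfolding lead_def by blast
  have w: "set (wd N @ wd M) \<subseteq> Pi" using M c(1) chainm_RK wd_set by auto
  have mw: "mm (wd N @ wd M) = N + M" using M c(1) chainm_RK wd_mm by auto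
  obtain c2 where c2: "c2 \<noteq> 0" "prod_list (wd N @ wd M) - sc c2 (PM (N + M)) \<in> LowC (N + M)"
    using word_chain[OF w] NM mw by auto
  have A: "PM N * PM M - sc c2 (PM (N + M)) \<in> LowC (N + M)" using c2(2) by (simp add: PM_def)
  have B: "(x - sc c (PM N)) * PM M \<in> LowC (N + M)" using LowC_mult_right[OF M c(3)] .
  have "(x - sc c (PM N)) * PM M + sc c (PM N * PM M - sc c2 (PM (N + M))) \<in> LowC (N + M)"
    using A B unfolding LowC_def by (intro span_add span_scale)
  moreover have "(x - sc c (PM N)) * PM M + sc c (PM N * PM M - sc c2 (PM (N + M))) =
      x * PM M - sc (c * c2) (PM (N + M))"
    by (simp add: left_diff_distrib scale_right_diff_distrib scm)
  ultimately show ?thesis using NM c c2 unfolding lead_def by (intro conjI exI[of _ "c * c2"]) auto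
qed

definition linset :: "'a set \<Rightarrow> bool" where
  "linset I \<longleftrightarrow> 0 \<in> I \<and> (\<forall>x\<in>I. \<forall>y\<in>I. x + y \<in> I) \<and> (\<forall>c. \<forall>x\<in>I. sc c x \<in> I)"

definition LS :: "'a set \<Rightarrow> nat multiset set" where
  "LS I = {N. \<exists>x\<in>I. lead x N}"

lemma linset_diff: "linset I \<Longrightarrow> x \<in> I \<Longrightarrow> y \<in> I \<Longrightarrow> x - y \<in> I"
proof -
  assume A: "linset I" "x \<in> I" "y \<in> I"
  then have "x + sc (-1) y \<in> I" unfolding linset_def by blast
  then show ?thesis by (simp add: scale_minus_left)
qed

lemma ideal_eq:
  assumes I: "linset I" and J: "linset J" and IJ: "I \<subseteq> J" and LSJ: "LS J \<subseteq> LS I"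
  shows "J \<subseteq> I"
proof -
  have main: "\<forall>x. x \<in> J \<and> lead x N \<longrightarrow> x \<in> I" if "set_mset N \<subseteq> RK" for N
    using that
  proof (induction N rule: wf_induct_rule[OF wf_ltm_rel[OF finRK]])
    case (1 N)
    show ?case
    proof (intro allI impI, elim conjE)
      fix x assume xJ: "x \<in> J" and lx: "lead x N"
      have "N \<in> LS I" using LSJ xJ lx unfolding LS_def by blast
      then obtain y where yI: "y \<in> I" and ly: "lead y N" unfolding LS_def by blast
      obtain c where c: "c \<noteq> 0" "x - sc c (PM N) \<in> LowC N" using lx unfolding lead_def by blast
      obtain d where d: "d \<noteq> 0" "y - sc d (PM N) \<in> LowC N" using ly unfolding lead_def by blast
      define z where "z = x - sc (c / d) y"
      have "z = (x - sc c (PM N)) - sc (c / d) (y - sc d (PM N))"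
        using d(1) by (simp add: z_def scale_right_diff_distrib)
      then have zl: "z \<in> LowC N" using c d unfolding LowC_def by (simp add: span_diff span_scale)
      have syI: "sc (c / d) y \<in> I" using I yI unfolding linset_def by blast
      then have zJ: "z \<in> J" unfolding z_def using linset_diff[OF J xJ] IJ by blast
      have zI: "z \<in> I"
      proof (cases "z = 0")
        case True then show ?thesis using I unfolding linset_def by simp
      next
        case False
        then obtain N' where lz: "lead z N'" using lead_exists by blast
        have "ltm N' N" using lead_lt[OF lz zl] .
        moreover have "set_mset N' \<subseteq> RK" using lz unfolding lead_def using chainm_RK by blast
        ultimately have "(N', N) \<in> ltm_rel RK" using 1(2) by (simp add: ltm_rel_def)
        then show ?thesis using 1(1) \<open>set_mset N' \<subseteq> RK\<close> zJ lz by blast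
      qed
      have "x = z + sc (c / d) y" by (simp add: z_def)
      then show "x \<in> I" using zI syI I unfolding linset_def by metis
    qed
  qed
  show ?thesis
  proof
    fix x assume xJ: "x \<in> J"
    show "x \<in> I"
    proof (cases "x = 0")
      case True then show ?thesis using I unfolding linset_def by simp
    next
      case False
      then obtain N where "lead x N" using lead_exists by blast
      moreover then have "set_mset N \<subseteq> RK" unfolding lead_def using chainm_RK by blast
      ultimately show ?thesis using main xJ by blast
    qed
  qed
qed

lemma acc_gen:
  fixes I :: "nat \<Rightarrow> 'a set"
  assumes lin: "\<And>n. linset (I n)" and mono: "\<And>n. I n \<subseteq> I (Suc n)"
    and up: "\<And>n x N N'. x \<in> I n \<Longrightarrow> lead x N \<Longrightarrow> N \<subseteq># N' \<Longrightarrow> chainm N' \<Longrightarrow> \<exists>y\<in>I n. lead y N'"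
  shows "\<exists>m. \<forall>n\<ge>m. I n = I m"
proof (rule ccontr)
  assume "\<not> (\<exists>m. \<forall>n\<ge>m. I n = I m)"
  then have "\<forall>m. \<exists>n. n \<ge> m \<and> I n \<noteq> I m" by blast
  then obtain h where h: "\<And>m. h m \<ge> m \<and> I (h m) \<noteq> I m" by metis
  define g where "g k = (h ^^ k) 0" for k
  have gS: "g (Suc k) = h (g k)" for k by (simp add: g_def)
  have Imono: "I m \<subseteq> I n" if "m \<le> n" for m n
    using lift_Suc_mono_le[of I, OF mono that] .
  have gmono: "g m \<le> g n" if "m \<le> n" for m n
    using lift_Suc_mono_le[of g, OF _ that] gS h by (metis)
  have "\<exists>N. N \<in> LS (I (g (Suc k))) \<and> N \<notin> LS (I (g k))" for k
  proof (rule ccontr)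
    assume "\<not> (\<exists>N. N \<in> LS (I (g (Suc k))) \<and> N \<notin> LS (I (g k)))"
    then have "LS (I (g (Suc k))) \<subseteq> LS (I (g k))" by blast
    moreover have "I (g k) \<subseteq> I (g (Suc k))" using Imono gmono by simp
    ultimately have "I (g (Suc k)) \<subseteq> I (g k)" using ideal_eq lin by blast
    then have "I (g (Suc k)) = I (g k)" using \<open>I (g k) \<subseteq> I (g (Suc k))\<close> by blast
    then show False using h gS by metis
  qed
  then obtain Ns where Ns: "\<And>k. Ns k \<in> LS (I (g (Suc k))) \<and> Ns k \<notin> LS (I (g k))" by metis
  have "set_mset (Ns k) \<subseteq> RK" for k
    using Ns[of k] unfolding LS_def lead_def using chainm_RK by blast
  then obtain i j where ij: "i < j" "Ns i \<subseteq># Ns j" using dickson_mset[OF finRK] by blast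
  obtain x where x: "x \<in> I (g (Suc i))" "lead x (Ns i)" using Ns[of i] unfolding LS_def by blast
  have "I (g (Suc i)) \<subseteq> I (g j)" using ij(1) gmono Imono by simp
  then have xj: "x \<in> I (g j)" using x(1) by blast
  have "chainm (Ns j)" using Ns[of j] unfolding LS_def lead_def by blast
  then obtain y where "y \<in> I (g j)" "lead y (Ns j)" using up[OF xj x(2) ij(2)] by blast
  then have "Ns j \<in> LS (I (g j))" unfolding LS_def by blast
  then show False using Ns[of j] by blast
qed

end



context qasl
begin

lemma left_lin: assumes "left_ideal I" shows "linset I"
proof -
  have "sc c x \<in> I" if "x \<in> I" for c x
  proof -
    have "sc c 1 * x \<in> I" using assms that unfolding left_ideal_def by blast
    moreover have "sc c x = sc c 1 * x" using scm[of c 1 x] by simp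
    ultimately show ?thesis by simp
  qed
  then show ?thesis using assms unfolding left_ideal_def linset_def by blast
qed

lemma right_lin: assumes "right_ideal I" shows "linset I"
proof -
  have "sc c x \<in> I" if "x \<in> I" for c x
  proof -
    have "x * sc c 1 \<in> I" using assms that unfolding right_ideal_def by blast
    moreover have "sc c x = x * sc c 1" using scm2[of c x 1] by simp
    ultimately show ?thesis by simp
  qed
  then show ?thesis using assms unfolding right_ideal_def linset_def by blast
qed

lemma left_up:
  assumes I: "left_ideal I" and x: "x \<in> I" "lead x N" and sub: "N \<subseteq># N'" and ch: "chainm N'"
  shows "\<exists>y\<in>I. lead y N'"
proof -
  define M where "M = N' - N"
  have MN: "M + N = N'" unfolding M_def using sub by (rule subset_mset.diff_add)
  have "M \<subseteq># N'" unfolding M_def by simp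
  then have chM: "chainm M" using ch chainm_sub by blast
  have "lead (PM M * x) (M + N)" using lead_mult_left[OF x(2) chM] ch MN by simp
  moreover have "PM M * x \<in> I" using I x(1) unfolding left_ideal_def by blast
  ultimately show ?thesis using MN by auto
qed

lemma right_up:
  assumes I: "right_ideal I" and x: "x \<in> I" "lead x N" and sub: "N \<subseteq># N'" and ch: "chainm N'"
  shows "\<exists>y\<in>I. lead y N'"
proof -
  define M where "M = N' - N"
  have MN: "N + M = N'" unfolding M_def using sub by (rule subset_mset.add_diff_inverse)
  have "M \<subseteq># N'" unfolding M_def by simp
  then have chM: "chainm M" using ch chainm_sub by blast
  have "lead (x * PM M) (N + M)" using lead_mult_right[OF x(2) chM] ch MN by simp
  moreover have "x * PM M \<in> I" using I x(1) unfolding right_ideal_def by blast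
  ultimately show ?thesis using MN by auto
qed

theorem noeth: "noetherian_ring TYPE('a)"
  unfolding noetherian_ring_def
proof (intro conjI allI impI)
  fix I :: "nat \<Rightarrow> 'a set"
  assume A: "(\<forall>n. left_ideal (I n)) \<and> (\<forall>n. I n \<subseteq> I (Suc n))"
  show "\<exists>m. \<forall>n\<ge>m. I n = I m"
  proof (rule acc_gen)
    show "linset (I n)" for n using A left_lin by blast
    show "I n \<subseteq> I (Suc n)" for n using A by blast
    show "\<exists>y\<in>I n. lead y N'" if "x \<in> I n" "lead x N" "N \<subseteq># N'" "chainm N'" for n x N N'
      using left_up A that by blast
  qed
next
  fix I :: "nat \<Rightarrow> 'a set"
  assume A: "(\<forall>n. right_ideal (I n)) \<and> (\<forall>n. I n \<subseteq> I (Suc n))"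
  show "\<exists>m. \<forall>n\<ge>m. I n = I m"
  proof (rule acc_gen)
    show "linset (I n)" for n using A right_lin by blast
    show "I n \<subseteq> I (Suc n)" for n using A by blast
    show "\<exists>y\<in>I n. lead y N'" if "x \<in> I n" "lead x N" "N \<subseteq># N'" "chainm N'" for n x N N'
      using right_up A that by blast
  qed
qed

end



context qasl
begin

lemma gradall: "(\<forall>n. subspace (Agr n)) \<and>
     (\<forall>N f. (\<forall>i\<le>N. f i \<in> Agr i) \<and> (\<Sum>i\<le>N. f i) = 0 \<longrightarrow> (\<forall>i\<le>N. f i = 0)) \<and>
     1 \<in> Agr 0 \<and>
     (\<forall>i j x y. x \<in> Agr i \<and> y \<in> Agr j \<longrightarrow> x * y \<in> Agr (i + j))"
  using grad unfolding graded_k_algebra_def by (elim conjE) (intro conjI; assumption)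

lemma Agr_sub: "subspace (Agr n)" using gradall by blast
lemma Agr_indep: "(\<forall>i\<le>N. f i \<in> Agr i) \<Longrightarrow> (\<Sum>i\<le>N. f i) = 0 \<Longrightarrow> i \<le> N \<Longrightarrow> f i = 0"
  using gradall by blast
lemma one_Agr: "1 \<in> Agr 0" using gradall by blast
lemma mult_Agr: "x \<in> Agr i \<Longrightarrow> y \<in> Agr j \<Longrightarrow> x * y \<in> Agr (i + j)"
  using gradall by blast

definition dg :: "'a \<Rightarrow> nat" where "dg a = (SOME n. n > 0 \<and> a \<in> Agr n)"

lemma dg: "a \<in> Pi \<Longrightarrow> dg a > 0 \<and> a \<in> Agr (dg a)"
  unfolding dg_def using homog by (rule someI_ex)

lemma prod_Agr: "set w \<subseteq> Pi \<Longrightarrow> prod_list w \<in> Agr (sum_list (map dg w))"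
proof (induction w)
  case Nil then show ?case using one_Agr by simp
next
  case (Cons a w)
  then show ?case using dg[of a] mult_Agr by simp
qed

lemma len_le: "set w \<subseteq> Pi \<Longrightarrow> length w \<le> sum_list (map dg w)"
proof (induction w)
  case Nil then show ?case by simp
next
  case (Cons a w)
  then show ?case using dg[of a] by simp
qed

definition degm :: "nat multiset \<Rightarrow> nat" where "degm K = sum_list (map dg (wd K))"

lemma PM_Agr: "chainm K \<Longrightarrow> PM K \<in> Agr (degm K)"
  unfolding PM_def degm_def using prod_Agr wd_set chainm_RK by blast

lemma size_degm: assumes "chainm K" shows "size K \<le> degm K"
proof -
  have "length (wd K) = size K" unfolding wd_def by (metis length_map mset_sorted_list_of_multiset size_mset)
  then show ?thesis unfolding degm_def using len_le wd_set chainm_RK assms by metis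
qed

definition kq :: "'a \<Rightarrow> nat multiset" where "kq a = (SOME K. chainm K \<and> a = PM K)"

lemma kq: "a \<in> QB \<Longrightarrow> chainm (kq a) \<and> a = PM (kq a)"
  unfolding kq_def QB_def by (rule someI_ex) blast

definition dq :: "'a \<Rightarrow> nat" where "dq a = degm (kq a)"

lemma QB_Agr: "a \<in> QB \<Longrightarrow> a \<in> Agr (dq a)"
  unfolding dq_def using kq PM_Agr by metis

definition Bn :: "nat \<Rightarrow> 'a set" where "Bn n = {a \<in> QB. dq a = n}"

lemma Agr_span: assumes x: "x \<in> Agr n" shows "x \<in> span (Bn n)"
proof -
  have "x \<in> span QB" using spanQ by blast
  then have "\<exists>t r. x = (\<Sum>a\<in>t. sc (r a) a) \<and> finite t \<and> t \<subseteq> QB"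
    unfolding span_explicit by simp
  then obtain t r where t0: "x = (\<Sum>a\<in>t. sc (r a) a)" "finite t" "t \<subseteq> QB"
    by (elim exE conjE)
  then have t: "finite t" "t \<subseteq> QB" "x = (\<Sum>a\<in>t. sc (r a) a)" by simp_all
  define N where "N = n + sum dq t"
  define y where "y d = (\<Sum>a\<in>{a\<in>t. dq a = d}. sc (r a) a)" for d
  have yA: "y d \<in> Agr d" for d
    unfolding y_def using Agr_sub
  proof (rule subspace_sum)
    fix a assume "a \<in> {a\<in>t. dq a = d}"
    then have "a \<in> Agr d" using t(2) QB_Agr by auto
    then show "sc (r a) a \<in> Agr d" using Agr_sub by (rule subspace_scale[rotated])
  qed
  have "dq ` t \<subseteq> {..N}" unfolding N_def using t(1) by (auto intro: member_le_sum trans_le_add2)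
  then have xs: "x = (\<Sum>d\<le>N. y d)" unfolding y_def t(3) using t(1) by (simp add: sum.group)
  define f where "f i = y i - (if i = n then x else 0)" for i
  have fA: "\<forall>i\<le>N. f i \<in> Agr i"
  proof (intro allI impI)
    fix i
    have "(if i = n then x else 0) \<in> Agr i" using x Agr_sub subspace_0 by auto
    then show "f i \<in> Agr i" unfolding f_def using yA Agr_sub by (intro subspace_diff) auto
  qed
  have "(\<Sum>i\<le>N. f i) = (\<Sum>i\<le>N. y i) - (\<Sum>i\<le>N. (if i = n then x else 0))"
    unfolding f_def by (rule sum_subtractf)
  also have "\<dots> = 0" using xs by (simp add: N_def)
  finally have "f n = 0" using Agr_indep[OF fA] by (simp add: N_def)
  then have "x = y n" unfolding f_def by simp
  moreover have "y n \<in> span (Bn n)" unfolding y_def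
  proof (rule span_sum)
    fix a assume "a \<in> {a\<in>t. dq a = n}"
    then have "a \<in> Bn n" using t(2) unfolding Bn_def by blast
    then show "sc (r a) a \<in> span (Bn n)" by (intro span_scale span_base)
  qed
  ultimately show ?thesis by simp
qed

lemma card_bounded_msets:
  assumes "finite A" shows "card {M. set_mset M \<subseteq> A \<and> size M \<le> n} \<le> (n + 1) ^ card A"
proof -
  let ?S = "{M. set_mset M \<subseteq> A \<and> size M \<le> n}"
  let ?f = "\<lambda>M. restrict (count M) A"
  have inj: "inj_on ?f ?S"
  proof (rule inj_onI)
    fix M M' assume M: "M \<in> ?S" "M' \<in> ?S" "?f M = ?f M'"
    have "count M x = count M' x" for x
    proof (cases "x \<in> A")
      case True then show ?thesis using M(3) by (metis restrict_apply')
    next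
      case False
      then have "x \<notin># M" "x \<notin># M'" using M(1,2) by auto
      then show ?thesis by (simp add: not_in_iff)
    qed
    then show "M = M'" by (rule multiset_eqI)
  qed
  have img: "?f ` ?S \<subseteq> PiE A (\<lambda>_. {0..n})"
  proof
    fix g assume "g \<in> ?f ` ?S"
    then obtain M where M: "M \<in> ?S" "g = ?f M" by blast
    have "count M x \<le> n" for x using M(1) count_le_size[of M x] by auto
    then show "g \<in> PiE A (\<lambda>_. {0..n})" using M(2) by auto
  qed
  have "card ?S \<le> card (PiE A (\<lambda>_. {0..n}))"
    using card_inj_on_le[OF inj img] assms by (simp add: finite_PiE)
  also have "\<dots> = (n + 1) ^ card A" using assms by (simp add: card_PiE)
  finally show ?thesis .
qed

theorem PG: "polynomial_growth sc Agr"
  unfolding polynomial_growth_def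
proof (intro exI[of _ "(2::real) ^ card RK"] exI[of _ "card RK"] conjI allI impI)
  let ?p = "card RK"
  show "(0::real) < 2 ^ ?p" by simp
  fix n :: nat assume n: "1 \<le> n"
  let ?S = "{M. set_mset M \<subseteq> RK \<and> size M \<le> n}"
  have BS: "Bn n \<subseteq> PM ` ?S"
  proof
    fix a assume a: "a \<in> Bn n"
    then have K: "chainm (kq a)" "a = PM (kq a)" "degm (kq a) = n" using kq unfolding Bn_def dq_def by auto
    then have "kq a \<in> ?S" using size_degm chainm_RK by fastforce
    then show "a \<in> PM ` ?S" using K by blast
  qed
  have finS: "finite ?S" using finite_bounded_msets[OF finRK] .
  then have finB: "finite (Bn n)" using BS finite_surj by blast
  have BA: "Bn n \<subseteq> Agr n" unfolding Bn_def using QB_Agr by auto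
  have AB: "Agr n \<subseteq> span (Bn n)" using Agr_span by blast
  show "\<exists>B. finite B \<and> B \<subseteq> Agr n \<and> Agr n \<subseteq> span B" using finB BA AB by blast
  have "dim (Agr n) \<le> card (Bn n)" using dim_le_card[OF AB finB] .
  also have "\<dots> \<le> card (PM ` ?S)" using BS finS by (intro card_mono) auto
  also have "\<dots> \<le> card ?S" using finS by (rule card_image_le)
  also have "\<dots> \<le> (n + 1) ^ ?p" using card_bounded_msets[OF finRK] .
  also have "\<dots> \<le> (2 * n) ^ ?p" using n by (intro power_mono) auto
  also have "\<dots> = 2 ^ ?p * n ^ ?p" by (simp add: power_mult_distrib)
  finally have "real (dim (Agr n)) \<le> real (2 ^ ?p * n ^ ?p)" by (simp only: of_nat_le_iff)
  then show "real (dim (Agr n)) \<le> 2 ^ ?p * real n ^ ?p" by simp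
qed

end

theorem main_thm:
  fixes sc :: "'k::field \<Rightarrow> 'a::ring_1 \<Rightarrow> 'a"
    and Agr :: "nat \<Rightarrow> 'a set"
    and Pi :: "'a set"
    and lst :: "'a \<Rightarrow> 'a \<Rightarrow> bool"
  assumes A: "quantum_graded_ASL sc Agr Pi lst"
  shows "noetherian_ring TYPE('a) \<and> polynomial_growth sc Agr"
proof -
  have h1: "finite Pi"
    using A unfolding quantum_graded_ASL_def by (elim conjE) assumption
  have h2: "\<forall>a\<in>Pi. \<not> lst a a"
    using A unfolding quantum_graded_ASL_def by (elim conjE) assumption
  have h3: "\<forall>a\<in>Pi. \<forall>b\<in>Pi. \<forall>c\<in>Pi. lst a b \<and> lst b c \<longrightarrow> lst a c"
    using A unfolding quantum_graded_ASL_def by (elim conjE) assumption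
  note h = h1 h2 h3
  from rank_exists[OF h] obtain rk :: "'a \<Rightarrow> nat" where
    rk1: "inj_on rk Pi" and rk2: "\<forall>a\<in>Pi. \<forall>b\<in>Pi. lst a b \<longrightarrow> rk a < rk b"
    by (elim exE conjE)
  have rk3: "\<And>a b. a \<in> Pi \<Longrightarrow> b \<in> Pi \<Longrightarrow> lst a b \<Longrightarrow> rk a < rk b" using rk2 by blast
  interpret qasl sc Agr Pi lst rk
    by (rule qasl.intro[OF A rk1 rk3])
  show ?thesis using noeth PG by blast
qed


theorem lemma1p2p2:
  fixes sc :: "'k::field \<Rightarrow> 'a::ring_1 \<Rightarrow> 'a"
    and Agr :: "nat \<Rightarrow> 'a set"
    and Pi :: "'a set"
    and lst :: "'a \<Rightarrow> 'a \<Rightarrow> bool"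
  assumes "quantum_graded_ASL sc Agr Pi lst"
  shows "noetherian_ring TYPE('a) \<and> polynomial_growth sc Agr"
  using main_thm[OF assms] .

end
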